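(* There is no function $g:\mathbb{N}\to\mathbb{N}$ such that $\operatorname{dbw}(H)\le g(\operatorname{dbw}(J))$ for every digraph $J$ and every directed topological minor $H$ of $J$.
   Context: All digraphs are finite and loopless. Contracting an edge $\vec{xy}$ of $D$ removes $\vec{xy}$, $x$, $y$ and adds a new vertex with in-neighbourhood $(N^-(x)\cup N^-(y))\setminus\{x,y\}$ and out-neighbourhood $(N^+(x)\cup N^+(y))\setminus\{x,y\}$. Let $V_3(D)$ be the set of vertices incident with at least three edges. An edge $\vec{xy}$ is 2-contractible in $D$ if $\{x,y\}\not\subseteq V_3(D)$ and either $\vec{yx}\in E(D)$ or there is no pair $(w,z)$ of vertices of $V_3(D)$ (possibly $w=z$) such that $x$ can reach $w$ and $z$ can reach $y$ by directed paths in $D-\vec{xy}$. $H$ is a directed topological minor of $D$ if $H$ is obtained from a subgraph of $D$ by a sequence of contractions of 2-contractible edges. Directed branch-width: for $X\subseteq E(D)$, $S^V_X=\{y: \exists x,z,\ \vec{xy}\in E(D)\setminus X,\ \vec{yz}\in X\}$; $\operatorname{dbw}(D)$ is the minimum over $(T,\beta)$ ($T$ a tree of maximum degree at most three, $\beta$ a bijection from leaves onto $E(D)$) of the maximum over tree edges of $|S^V_{\beta(Y)}\cup S^V_{E(D)\setminus\beta(Y)}|$, $Y$ the leaves on one side (0 if no tree edges). *)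

theory Defs
  imports Main
begin

type_synonym digraph = "nat set \<times> (nat \<times> nat) set"

definition is_digraph :: "digraph \<Rightarrow> bool" where
  "is_digraph D \<longleftrightarrow> finite (fst D) \<and> snd D \<subseteq> fst D \<times> fst D \<and> (\<forall>v. (v, v) \<notin> snd D)"

definition is_subgraph :: "digraph \<Rightarrow> digraph \<Rightarrow> bool" where
  "is_subgraph H D \<longleftrightarrow> fst H \<subseteq> fst D \<and> snd H \<subseteq> snd D \<and> snd H \<subseteq> fst H \<times> fst H"

definition V3 :: "digraph \<Rightarrow> nat set" where
  "V3 D = {v \<in> fst D. card {e \<in> snd D. fst e = v \<or> snd e = v} \<ge> 3}"

text \<open>Contraction of the edge xy; the new vertex is given the name x
(this yields a digraph isomorphic to the one in the paper).\<close>
definition contract :: "digraph \<Rightarrow> nat \<Rightarrow> nat \<Rightarrow> digraph" where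
  "contract D x y =
     (let f = (\<lambda>v. if v = y then x else v)
      in (fst D - {y}, {(f a, f b) | a b. (a, b) \<in> snd D \<and> f a \<noteq> f b}))"

definition two_contractible :: "digraph \<Rightarrow> nat \<Rightarrow> nat \<Rightarrow> bool" where
  "two_contractible D x y \<longleftrightarrow>
     (x, y) \<in> snd D \<and> \<not> ({x, y} \<subseteq> V3 D) \<and>
     ((y, x) \<in> snd D \<or>
      \<not> (\<exists>w \<in> V3 D. \<exists>z \<in> V3 D.
            (x, w) \<in> (snd D - {(x, y)})\<^sup>* \<and> (z, y) \<in> (snd D - {(x, y)})\<^sup>*))"

inductive dtop_minor :: "digraph \<Rightarrow> digraph \<Rightarrow> bool" where
  sub: "is_subgraph H D \<Longrightarrow> dtop_minor H D"
| contr: "dtop_minor H D \<Longrightarrow> two_contractible H x y \<Longrightarrow> dtop_minor (contract H x y) D"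

definition is_tree :: "nat set \<Rightarrow> (nat \<times> nat) set \<Rightarrow> bool" where
  "is_tree N A \<longleftrightarrow> finite N \<and> N \<noteq> {} \<and> A \<subseteq> N \<times> N \<and> sym A \<and> (\<forall>v. (v, v) \<notin> A) \<and>
     (\<forall>u \<in> N. \<forall>v \<in> N. (u, v) \<in> A\<^sup>*) \<and>
     (\<forall>a b. (a, b) \<in> A \<longrightarrow> (a, b) \<notin> (A - {(a, b), (b, a)})\<^sup>*)"

definition tdeg :: "(nat \<times> nat) set \<Rightarrow> nat \<Rightarrow> nat" where
  "tdeg A u = card {v. (u, v) \<in> A}"

definition leaves :: "nat set \<Rightarrow> (nat \<times> nat) set \<Rightarrow> nat set" where
  "leaves N A = {u \<in> N. tdeg A u \<le> 1}"

definition SV :: "digraph \<Rightarrow> (nat \<times> nat) set \<Rightarrow> nat set" where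
  "SV D X = {y. \<exists>x z. (x, y) \<in> snd D - X \<and> (y, z) \<in> X}"

definition side_leaves :: "nat set \<Rightarrow> (nat \<times> nat) set \<Rightarrow> nat \<Rightarrow> nat \<Rightarrow> nat set" where
  "side_leaves N A a b = {l \<in> leaves N A. (a, l) \<in> (A - {(a, b), (b, a)})\<^sup>*}"

definition decomp_width ::
  "digraph \<Rightarrow> nat set \<Rightarrow> (nat \<times> nat) set \<Rightarrow> (nat \<Rightarrow> nat \<times> nat) \<Rightarrow> nat" where
  "decomp_width D N A \<beta> =
     Max (insert 0 {card (SV D (\<beta> ` side_leaves N A a b) \<union> SV D (snd D - \<beta> ` side_leaves N A a b))
                    | a b. (a, b) \<in> A})"

definition is_branch_decomp ::
  "digraph \<Rightarrow> nat set \<Rightarrow> (nat \<times> nat) set \<Rightarrow> (nat \<Rightarrow> nat \<times> nat) \<Rightarrow> bool" where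
  "is_branch_decomp D N A \<beta> \<longleftrightarrow> is_tree N A \<and> (\<forall>u \<in> N. tdeg A u \<le> 3) \<and>
     bij_betw \<beta> (leaves N A) (snd D)"

definition dbw :: "digraph \<Rightarrow> nat" where
  "dbw D = (if snd D = {} then 0 else
     Inf {decomp_width D N A \<beta> | N A \<beta>. is_branch_decomp D N A \<beta>})"

end

theory Submission
  imports Defs "HOL-Library.Nat_Bijection"
begin


lemma path_avoid:
  assumes "(c,v) \<in> R\<^sup>*" "(c,a) \<notin> R\<^sup>*"
  shows "(c,v) \<in> {(x,y). (x,y) \<in> R \<and> x \<noteq> a \<and> y \<noteq> a}\<^sup>*"
  using assms
proof (induction rule: rtrancl_induct)
  case base then show ?case by simp
next
  case (step y z)
  have "y \<noteq> a" using step by auto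
  moreover have "z \<noteq> a" using step by (meson rtrancl.rtrancl_into_rtrancl)
  ultimately show ?case using step by (auto intro: rtrancl.rtrancl_into_rtrancl)
qed

lemma first_step:
  assumes "(a,l) \<in> R\<^sup>*"
  shows "l = a \<or> (\<exists>c. (a,c) \<in> R \<and> c \<noteq> a \<and> (c,l) \<in> {(x,y). (x,y) \<in> R \<and> x \<noteq> a \<and> y \<noteq> a}\<^sup>*)"
  using assms
proof (induction rule: rtrancl_induct)
  case base then show ?case by simp
next
  case (step y z)
  show ?case
  proof (cases "z = a")
    case True then show ?thesis by simp
  next
    case False
    show ?thesis
    proof (cases "y = a")
      case True then show ?thesis using False step by auto
    next
      case ya: False
      then obtain c where "(a,c) \<in> R" "c \<noteq> a" "(c,y) \<in> {(x,y). (x,y) \<in> R \<and> x \<noteq> a \<and> y \<noteq> a}\<^sup>*"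
        using step by auto
      moreover have "(y,z) \<in> {(x,y). (x,y) \<in> R \<and> x \<noteq> a \<and> y \<noteq> a}" using ya False step by auto
      ultimately show ?thesis by (meson rtrancl.rtrancl_into_rtrancl)
    qed
  qed
qed

lemma cover:
  assumes "(a,l) \<in> A\<^sup>*"
  shows "(a,l) \<in> (A - {(a,b),(b,a)})\<^sup>* \<or> (b,l) \<in> (A - {(a,b),(b,a)})\<^sup>*"
  using assms
proof (induction rule: rtrancl_induct)
  case base then show ?case by simp
next
  case (step y z)
  show ?case
  proof (cases "(y,z) \<in> {(a,b),(b,a)}")
    case True then show ?thesis by auto
  next
    case False
    then have "(y,z) \<in> A - {(a,b),(b,a)}" using step by auto
    then show ?thesis using step.IH by (meson rtrancl.rtrancl_into_rtrancl)
  qed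
qed

definition sideV :: "(nat \<times> nat) set \<Rightarrow> nat \<Rightarrow> nat \<Rightarrow> nat set" where
  "sideV A a b = {v. (a,v) \<in> (A - {(a,b),(b,a)})\<^sup>*}"

lemma reach_in: "(a,v) \<in> R\<^sup>* \<Longrightarrow> R \<subseteq> N \<times> N \<Longrightarrow> v = a \<or> v \<in> N"
  by (induction rule: rtrancl_induct) auto

lemma balanced:
  assumes tr: "is_tree N A" and deg: "\<forall>u\<in>N. tdeg A u \<le> 3"
    and m: "m = card (leaves N A)" and m2: "m \<ge> 2"
  shows "\<exists>a b. (a,b) \<in> A \<and> m \<le> 3 * card (side_leaves N A a b) \<and> 3 * card (side_leaves N A a b) \<le> 2 * m"
proof (rule ccontr)
  assume H0: "\<not> ?thesis"
  have fin: "finite N" and AN: "A \<subseteq> N \<times> N" and sy: "sym A" and irr: "\<forall>v. (v,v) \<notin> A"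
    and conn: "\<forall>u\<in>N. \<forall>v\<in>N. (u,v) \<in> A\<^sup>*"
    and mini: "\<forall>a b. (a,b) \<in> A \<longrightarrow> (a,b) \<notin> (A - {(a,b),(b,a)})\<^sup>*"
    using tr unfolding is_tree_def by auto
  have lN: "leaves N A \<subseteq> N" unfolding leaves_def by auto
  have finL: "finite (leaves N A)" using fin lN finite_subset by blast
  have sideL: "side_leaves N A a b \<subseteq> leaves N A" for a b unfolding side_leaves_def by auto
  have finS: "finite (side_leaves N A a b)" for a b using finL sideL finite_subset by blast
  have cardS: "card (side_leaves N A a b) \<le> m" for a b using m sideL finL card_mono by metis
  obtain l1 l2 where l12: "l1 \<in> leaves N A" "l2 \<in> leaves N A" "l1 \<noteq> l2"
  proof -
    have "\<not> card (leaves N A) \<le> Suc 0" using m2 m by simp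
    then show ?thesis using that card_le_Suc0_iff_eq[OF finL] by blast
  qed
  have "(l1,l2) \<in> A\<^sup>*" using conn l12 lN by auto
  then obtain a0 b0 where ab0: "(a0,b0) \<in> A" using l12(3) by (metis converse_rtranclE)
  have a0N: "a0 \<in> N" using ab0 AN by auto
  have cov0: "leaves N A \<subseteq> side_leaves N A a0 b0 \<union> side_leaves N A b0 a0"
  proof
    fix l assume l: "l \<in> leaves N A"
    then have "(a0,l) \<in> A\<^sup>*" using conn a0N lN by auto
    from cover[OF this, of b0] show "l \<in> side_leaves N A a0 b0 \<union> side_leaves N A b0 a0"
      using l unfolding side_leaves_def by (auto simp: insert_commute)
  qed
  have mle: "m \<le> card (side_leaves N A a0 b0) + card (side_leaves N A b0 a0)"
  proof -
    have "m \<le> card (side_leaves N A a0 b0 \<union> side_leaves N A b0 a0)"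
      unfolding m using finS cov0 by (intro card_mono) auto
    also have "\<dots> \<le> card (side_leaves N A a0 b0) + card (side_leaves N A b0 a0)" by (rule card_Un_le)
    finally show ?thesis .
  qed
  have ba0: "(b0,a0) \<in> A" using sy ab0 by (meson symD)
  have "\<exists>a b. (a,b) \<in> A \<and> 2 * m < 3 * card (side_leaves N A a b)"
  proof (rule ccontr)
    assume nn: "\<not> ?thesis"
    have "3 * card (side_leaves N A a0 b0) \<le> 2 * m" using nn ab0 by (meson not_le)
    moreover have "3 * card (side_leaves N A b0 a0) \<le> 2 * m" using nn ba0 by (meson not_le)
    moreover have "m \<le> 3 * card (side_leaves N A a0 b0) \<or> m \<le> 3 * card (side_leaves N A b0 a0)"
      using mle by linarith
    ultimately show False using H0 ab0 ba0 by blast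
  qed
  then obtain p0 where p0: "p0 \<in> A \<and> 2 * m < 3 * card (side_leaves N A (fst p0) (snd p0))"
    by auto
  have "\<exists>p. (p \<in> A \<and> 2 * m < 3 * card (side_leaves N A (fst p) (snd p))) \<and>
     (\<forall>q. (q \<in> A \<and> 2 * m < 3 * card (side_leaves N A (fst q) (snd q))) \<longrightarrow>
        card (sideV A (fst p) (snd p)) \<le> card (sideV A (fst q) (snd q)))"
    by (rule ex_has_least_nat[where P="\<lambda>p. p \<in> A \<and> 2 * m < 3 * card (side_leaves N A (fst p) (snd p))", OF p0])
  then obtain a b where ab: "(a,b) \<in> A" "2 * m < 3 * card (side_leaves N A a b)"
    and least: "\<And>c d. (c,d) \<in> A \<Longrightarrow> 2 * m < 3 * card (side_leaves N A c d) \<Longrightarrow>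
        card (sideV A a b) \<le> card (sideV A c d)"
    by fastforce
  have aN: "a \<in> N" using ab AN by auto
  define R where "R = A - {(a,b),(b,a)}"
  define Nb where "Nb = {v. (a,v) \<in> A}"
  have finNb: "finite Nb" unfolding Nb_def using AN fin by (intro finite_subset[OF _ fin]) auto
  have bNb: "b \<in> Nb" using ab unfolding Nb_def by auto
  have step: "l \<in> side_leaves N A a b \<Longrightarrow> l \<noteq> a \<Longrightarrow> \<exists>c\<in>Nb - {b}. l \<in> side_leaves N A c a" for l
  proof -
    assume l: "l \<in> side_leaves N A a b" and la: "l \<noteq> a"
    then have "(a,l) \<in> R\<^sup>*" unfolding side_leaves_def R_def by auto
    from first_step[OF this] la obtain c where c: "(a,c) \<in> R" "c \<noteq> a"
      "(c,l) \<in> {(x,y). (x,y) \<in> R \<and> x \<noteq> a \<and> y \<noteq> a}\<^sup>*" by auto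
    have "{(x,y). (x,y) \<in> R \<and> x \<noteq> a \<and> y \<noteq> a} \<subseteq> A - {(c,a),(a,c)}" unfolding R_def by auto
    then have "(c,l) \<in> (A - {(c,a),(a,c)})\<^sup>*" using c(3) rtrancl_mono by blast
    moreover have "c \<in> Nb - {b}" using c unfolding R_def Nb_def by auto
    ultimately show ?thesis using l unfolding side_leaves_def by auto
  qed
  show False
  proof (cases "a \<in> leaves N A")
    case True
    then have "card Nb \<le> 1" unfolding leaves_def tdeg_def Nb_def by auto
    then have "Nb = {b}" using bNb finNb using card_le_Suc0_iff_eq[OF finNb] by auto
    then have "side_leaves N A a b \<subseteq> {a}" using step by blast
    then have "card (side_leaves N A a b) \<le> 1" using card_mono[of "{a}"] by fastforce
    then show False using ab(2) m2 by linarith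
  next
    case False
    let ?C = "Nb - {b}"
    have "card Nb \<le> 3" using deg aN unfolding tdeg_def Nb_def by auto
    then have cC: "card ?C \<le> 2" using bNb finNb by (simp add: card_Diff_singleton)
    have small: "3 * card (side_leaves N A c a) < m" if c: "c \<in> ?C" for c
    proof (rule ccontr)
      assume "\<not> ?thesis"
      moreover have ca: "(c,a) \<in> A" using c sy unfolding Nb_def by (auto dest: symD)
      ultimately have "2 * m < 3 * card (side_leaves N A c a)" using H0 by (meson not_le)
      from least[OF ca this] have le: "card (sideV A a b) \<le> card (sideV A c a)" .
      have sub: "sideV A c a \<subseteq> sideV A a b"
      proof
        fix v assume "v \<in> sideV A c a"
        then have v: "(c,v) \<in> (A - {(c,a),(a,c)})\<^sup>*" unfolding sideV_def by auto
        have "(c,a) \<notin> (A - {(c,a),(a,c)})\<^sup>*" using mini ca by auto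
        from path_avoid[OF v this]
        have "(c,v) \<in> {(x,y). (x,y) \<in> A - {(c,a),(a,c)} \<and> x \<noteq> a \<and> y \<noteq> a}\<^sup>*" .
        moreover have "{(x,y). (x,y) \<in> A - {(c,a),(a,c)} \<and> x \<noteq> a \<and> y \<noteq> a} \<subseteq> R" unfolding R_def by auto
        ultimately have "(c,v) \<in> R\<^sup>*" using rtrancl_mono by blast
        moreover have "(a,c) \<in> R" using c irr unfolding R_def Nb_def by auto
        ultimately show "v \<in> sideV A a b" unfolding sideV_def R_def by (simp add: converse_rtrancl_into_rtrancl)
      qed
      have "a \<notin> sideV A c a" using mini ca unfolding sideV_def by auto
      moreover have "a \<in> sideV A a b" unfolding sideV_def by auto
      moreover have "finite (sideV A a b)"
      proof -
        have "sideV A a b \<subseteq> insert a N" unfolding sideV_def using reach_in[of a _ "A - {(a,b),(b,a)}" N] AN by auto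
        then show ?thesis using fin finite_subset by blast
      qed
      ultimately have "card (sideV A c a) < card (sideV A a b)" using sub by (intro psubset_card_mono) auto
      then show False using le by linarith
    qed
    have subU: "side_leaves N A a b \<subseteq> (\<Union>c\<in>?C. side_leaves N A c a)"
    proof
      fix l assume l: "l \<in> side_leaves N A a b"
      then have "l \<noteq> a" using False sideL by blast
      then obtain c where "c \<in> ?C" "l \<in> side_leaves N A c a" using step[OF l] by blast
      then show "l \<in> (\<Union>c\<in>?C. side_leaves N A c a)" by blast
    qed
    have "card (side_leaves N A a b) \<le> card (\<Union>c\<in>?C. side_leaves N A c a)"
      using subU finNb finS by (intro card_mono) auto
    also have "\<dots> \<le> (\<Sum>c\<in>?C. card (side_leaves N A c a))"
      by (rule card_UN_le) (use finNb in auto)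
    also have "\<dots> \<le> card ?C * ((m - 1) div 3)"
    proof -
      have "\<And>c. c \<in> ?C \<Longrightarrow> card (side_leaves N A c a) \<le> (m - 1) div 3"
      proof -
        fix c assume "c \<in> ?C"
        then have "card (side_leaves N A c a) * 3 \<le> m - 1" using small by fastforce
        then show "card (side_leaves N A c a) \<le> (m - 1) div 3"
          by (simp add: less_eq_div_iff_mult_less_eq)
      qed
      from sum_bounded_above[of ?C, OF this] show ?thesis by simp
    qed
    finally have "3 * card (side_leaves N A a b) \<le> 3 * (card ?C * ((m - 1) div 3))" by simp
    also have "\<dots> \<le> 2 * (m - 1)" using cC
    proof -
      have "3 * ((m - 1) div 3) \<le> m - 1" by simp
      then have "3 * (card ?C * ((m - 1) div 3)) \<le> card ?C * (m - 1)" by (simp add: mult.left_commute)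
      also have "\<dots> \<le> 2 * (m - 1)" using cC by (intro mult_le_mono1)
      finally show ?thesis .
    qed
    finally show False using ab(2) by linarith
  qed
qed



lemma pendant_path:
  assumes "(x,y) \<in> (A \<union> {(u,c),(c,u)} - S)\<^sup>*" "x \<noteq> c" "A \<subseteq> N \<times> N" "c \<notin> N"
    "(u,c) \<notin> S" "u \<in> N"
  shows "(y \<noteq> c \<longrightarrow> (x,y) \<in> (A - S)\<^sup>*) \<and> (y = c \<longrightarrow> (x,u) \<in> (A - S)\<^sup>*)"
  using assms(1)
proof (induction rule: rtrancl_induct)
  case base then show ?case using assms(2) by simp
next
  case (step y z)
  show ?case
  proof (cases "z = c")
    case True
    then have "y = u" using step(2) assms(3,4,6) by auto
    moreover have "y \<noteq> c" using step(2) True assms(3,4,6) by auto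
    ultimately show ?thesis using step(3) True by auto
  next
    case False
    show ?thesis
    proof (cases "y = c")
      case True
      then have "z = u" using step(2) assms(3,4,6) False by auto
      then show ?thesis using step(3) True False by auto
    next
      case yc: False
      then have "(y,z) \<in> A - S" using step(2) False by auto
      then show ?thesis using step(3) yc False by (meson rtrancl.rtrancl_into_rtrancl)
    qed
  qed
qed

lemma attach_tree:
  assumes tr: "is_tree N A" and u: "u \<in> N" and c: "c \<notin> N"
  shows "is_tree (insert c N) (A \<union> {(u,c),(c,u)})"
proof -
  have fin: "finite N" and AN: "A \<subseteq> N \<times> N" and sy: "sym A" and irr: "\<forall>v. (v,v) \<notin> A"
    and conn: "\<forall>x\<in>N. \<forall>y\<in>N. (x,y) \<in> A\<^sup>*"
    and mini: "\<forall>a b. (a,b) \<in> A \<longrightarrow> (a,b) \<notin> (A - {(a,b),(b,a)})\<^sup>*"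
    using tr unfolding is_tree_def by auto
  let ?A = "A \<union> {(u,c),(c,u)}"
  have uc: "u \<noteq> c" using u c by auto
  have conn2: "\<forall>x\<in>insert c N. \<forall>y\<in>insert c N. (x,y) \<in> ?A\<^sup>*"
  proof (intro ballI)
    fix x y assume x: "x \<in> insert c N" and y: "y \<in> insert c N"
    have m: "A\<^sup>* \<subseteq> ?A\<^sup>*" by (intro rtrancl_mono) auto
    have xu: "(x,u) \<in> ?A\<^sup>*" if "x \<in> N" for x using conn that u m by blast
    have uy: "(u,y) \<in> ?A\<^sup>*" if "y \<in> N" for y using conn that u m by blast
    have cu: "(c,u) \<in> ?A\<^sup>*" "(u,c) \<in> ?A\<^sup>*" by auto
    show "(x,y) \<in> ?A\<^sup>*"
      using x y xu uy cu rtrancl_trans[of x u ?A y] rtrancl_trans[of x u ?A c] rtrancl_trans[of c u ?A y]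
      by (cases "x = c"; cases "y = c") auto
  qed
  have mini2: "\<forall>a b. (a,b) \<in> ?A \<longrightarrow> (a,b) \<notin> (?A - {(a,b),(b,a)})\<^sup>*"
  proof (intro allI impI)
    fix a b assume ab: "(a,b) \<in> ?A"
    show "(a,b) \<notin> (?A - {(a,b),(b,a)})\<^sup>*"
    proof (cases "(a,b) \<in> A")
      case True
      then have h: "a \<noteq> c" "b \<noteq> c" "(u,c) \<notin> {(a,b),(b,a)}" using AN c by auto
      show ?thesis
      proof
        assume "(a,b) \<in> (?A - {(a,b),(b,a)})\<^sup>*"
        then have "(a,b) \<in> (A - {(a,b),(b,a)})\<^sup>*"
          using pendant_path[of a b A u c "{(a,b),(b,a)}" N] h AN c u by blast
        then show False using mini True by auto
      qed
    next
      case False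
      then have ab2: "(a,b) = (u,c) \<or> (a,b) = (c,u)" using ab by auto
      have R: "?A - {(a,b),(b,a)} = A" using ab2 AN c by auto
      show ?thesis
      proof
        assume "(a,b) \<in> (?A - {(a,b),(b,a)})\<^sup>*"
        then have "(a,b) \<in> A\<^sup>*" using R by simp
        then have "(a,b) \<in> A\<^sup>+" using ab2 uc by (auto simp: rtrancl_eq_or_trancl)
        then have "a \<in> N \<and> b \<in> N" using AN
          by (metis (no_types, lifting) mem_Sigma_iff subsetD tranclE converse_tranclE)
        then show False using ab2 c by auto
      qed
    qed
  qed
  show ?thesis unfolding is_tree_def
  proof (intro conjI)
    show "sym ?A" using sy by (auto simp: sym_def)
  qed (use fin AN irr conn2 mini2 u c uc in auto)
qed

lemma tdeg_attach:
  assumes "A \<subseteq> N \<times> N" "finite N" "c \<notin> N" "u \<in> N"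
  shows "tdeg (A \<union> {(u,c),(c,u)}) v = (if v = u then tdeg A u + 1 else if v = c then 1 else tdeg A v)"
proof -
  have fn: "finite {w. (v,w) \<in> A}" for v using assms by (intro finite_subset[OF _ assms(2)]) auto
  show ?thesis
  proof (cases "v = u")
    case True
    then have "{w. (v,w) \<in> A \<union> {(u,c),(c,u)}} = insert c {w. (v,w) \<in> A}" using assms by auto
    moreover have "c \<notin> {w. (v,w) \<in> A}" using assms by auto
    ultimately show ?thesis using True fn unfolding tdeg_def by simp
  next
    case False
    show ?thesis
    proof (cases "v = c")
      case True
      then have "{w. (v,w) \<in> A \<union> {(u,c),(c,u)}} = {u}" using assms by auto
      then show ?thesis using True False unfolding tdeg_def by simp
    next
      case vc: False
      then have "{w. (v,w) \<in> A \<union> {(u,c),(c,u)}} = {w. (v,w) \<in> A}" using False by auto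
      then show ?thesis using False vc unfolding tdeg_def by simp
    qed
  qed
qed

lemma tree_D:
  assumes "is_tree N A"
  shows "finite N" "A \<subseteq> N \<times> N" "sym A" "\<forall>v. (v,v) \<notin> A"
    "\<And>u v. u \<in> N \<Longrightarrow> v \<in> N \<Longrightarrow> (u,v) \<in> A\<^sup>*"
    "\<And>a b. (a,b) \<in> A \<Longrightarrow> (a,b) \<notin> (A - {(a,b),(b,a)})\<^sup>*"
  using assms unfolding is_tree_def by auto

lemma tree_deg_pos:
  assumes "is_tree N A" "l \<in> N" "w \<in> N" "l \<noteq> w"
  shows "tdeg A l \<ge> 1"
proof -
  have AN: "A \<subseteq> N \<times> N" and fin: "finite N" using tree_D(1,2)[OF assms(1)] by auto
  have lw: "(l,w) \<in> A\<^sup>*" by (rule tree_D(5)[OF assms(1) assms(2) assms(3)])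
  have "\<exists>q. (l,q) \<in> A" using lw assms(4) by (auto elim: converse_rtranclE)
  then obtain q where q: "(l,q) \<in> A" by blast
  have "{v. (l,v) \<in> A} \<subseteq> N" using AN by blast
  then have f: "finite {v. (l,v) \<in> A}" using fin by (rule finite_subset)
  have "q \<in> {v. (l,v) \<in> A}" using q by simp
  then have "card {v. (l,v) \<in> A} \<noteq> 0" using f by auto
  then show ?thesis unfolding tdeg_def by simp
qed
lemma tree_exists:
  assumes "m \<ge> 2"
  shows "\<exists>N A. is_tree N A \<and> card N \<ge> 2 \<and> (\<forall>u\<in>N. tdeg A u \<le> 3) \<and> card (leaves N A) = m"
  using assms
proof (induction m rule: nat_induct_at_least)
  case base
  let ?N = "{0::nat,1}" and ?A = "{(0::nat,1::nat),(1,0)}"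
  have c: "\<forall>u\<in>?N. \<forall>v\<in>?N. (u,v) \<in> ?A\<^sup>*" by auto
  have mi: "\<forall>a b. (a,b) \<in> ?A \<longrightarrow> (a,b) \<notin> (?A - {(a,b),(b,a)})\<^sup>*"
  proof (intro allI impI)
    fix a b assume "(a,b) \<in> ?A"
    then have "?A - {(a,b),(b,a)} = {}" "a \<noteq> b" by auto
    then show "(a,b) \<notin> (?A - {(a,b),(b,a)})\<^sup>*" by simp
  qed
  have t: "is_tree ?N ?A" unfolding is_tree_def
  proof (intro conjI)
    show "sym ?A" by (auto simp: sym_def)
  qed (use c mi in auto)
  have d: "tdeg ?A 0 = 1" "tdeg ?A 1 = 1" unfolding tdeg_def by auto
  have "leaves ?N ?A = ?N" unfolding leaves_def using d by auto
  then show ?case using t d by (intro exI[of _ ?N] exI[of _ ?A]) auto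
next
  case (Suc m)
  then obtain N A where tr: "is_tree N A" and cN: "card N \<ge> 2" and dg: "\<forall>u\<in>N. tdeg A u \<le> 3"
    and lv: "card (leaves N A) = m" by blast
  have fin: "finite N" and AN: "A \<subseteq> N \<times> N" using tree_D(1,2)[OF tr] by auto
  have finL: "finite (leaves N A)" using fin unfolding leaves_def by auto
  have "leaves N A \<noteq> {}" using lv Suc(1) by auto
  then obtain l where l: "l \<in> leaves N A" by blast
  have lN: "l \<in> N" using l unfolding leaves_def by auto
  have "\<not> card N \<le> Suc 0" using cN by simp
  then obtain w where w: "w \<in> N" "w \<noteq> l" using card_le_Suc0_iff_eq[OF fin] lN by blast
  have dl: "tdeg A l = 1" using tree_deg_pos[OF tr lN w(1)] w l unfolding leaves_def by auto
  define c1 where "c1 = Suc (Max N)"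
  define c2 where "c2 = Suc (Suc (Max N))"
  have c1N: "c1 \<notin> N"
  proof
    assume "c1 \<in> N" then have "c1 \<le> Max N" using fin by simp
    then show False unfolding c1_def by simp
  qed
  have c2N: "c2 \<notin> N"
  proof
    assume "c2 \<in> N" then have "c2 \<le> Max N" using fin by simp
    then show False unfolding c2_def by simp
  qed
  have c12: "c1 \<noteq> c2" unfolding c1_def c2_def by simp
  define N1 where "N1 = insert c1 N"
  define A1 where "A1 = A \<union> {(l,c1),(c1,l)}"
  define N2 where "N2 = insert c2 N1"
  define A2 where "A2 = A1 \<union> {(l,c2),(c2,l)}"
  have tr1: "is_tree N1 A1" unfolding N1_def A1_def by (rule attach_tree[OF tr lN c1N])
  have tr2: "is_tree N2 A2" unfolding N2_def A2_def
    by (rule attach_tree[OF tr1]) (use lN c2N c12 in \<open>auto simp: N1_def\<close>)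
  have fin1: "finite N1" "A1 \<subseteq> N1 \<times> N1" using tree_D(1,2)[OF tr1] by auto
  have deg2: "tdeg A2 v = (if v = l then 3 else if v = c1 \<or> v = c2 then 1 else tdeg A v)" if "v \<in> N2" for v
  proof -
    have e1: "tdeg A1 v = (if v = l then tdeg A l + 1 else if v = c1 then 1 else tdeg A v)" for v
      unfolding A1_def by (rule tdeg_attach[OF AN fin c1N lN])
    have "tdeg A2 v = (if v = l then tdeg A1 l + 1 else if v = c2 then 1 else tdeg A1 v)"
      unfolding A2_def by (rule tdeg_attach[OF fin1(2) fin1(1)]) (use c2N c12 lN in \<open>auto simp: N1_def\<close>)
    moreover have "l \<noteq> c1" "l \<noteq> c2" using c1N c2N lN by auto
    ultimately show ?thesis using dl c12 by (simp add: e1)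
  qed
  have lv2: "leaves N2 A2 = (leaves N A - {l}) \<union> {c1,c2}"
  proof (rule set_eqI)
    fix v
    have "v \<in> leaves N2 A2 \<longleftrightarrow> v \<in> N2 \<and> tdeg A2 v \<le> 1" unfolding leaves_def by simp
    also have "\<dots> \<longleftrightarrow> v \<in> (leaves N A - {l}) \<union> {c1,c2}"
    proof (cases "v \<in> N2")
      case True
      then show ?thesis using deg2[OF True] c1N c2N lN unfolding leaves_def N2_def N1_def by auto
    next
      case False
      then show ?thesis unfolding leaves_def N2_def N1_def by auto
    qed
    finally show "v \<in> leaves N2 A2 \<longleftrightarrow> v \<in> (leaves N A - {l}) \<union> {c1,c2}" .
  qed
  have "card (leaves N2 A2) = Suc m"
  proof -
    have "card (leaves N A - {l}) = m - 1" using l lv finL by simp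
    moreover have "(leaves N A - {l}) \<inter> {c1,c2} = {}" using c1N c2N unfolding leaves_def by auto
    ultimately have "card (leaves N2 A2) = m - 1 + 2" using lv2 finL c12
      by (simp add: card_Un_disjoint)
    then show ?thesis using Suc(1) by simp
  qed
  moreover have "card N \<le> card N2" by (rule card_mono) (auto simp: N2_def N1_def fin)
  then have "card N2 \<ge> 2" using cN by linarith
  moreover have "\<forall>u\<in>N2. tdeg A2 u \<le> 3" using deg2 dg unfolding N2_def N1_def by auto
  ultimately show ?case using tr2 by blast
qed



definition lab :: "nat \<Rightarrow> nat \<Rightarrow> nat" where "lab k i = prod_encode (k,i)"

lemma lab_eq[simp]: "lab k i = lab l j \<longleftrightarrow> k = l \<and> i = j"
  unfolding lab_def by simp

definition vn :: "nat \<Rightarrow> nat \<Rightarrow> nat" where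
  "vn b j = (if j < b then lab 4 j else lab 3 j)"

lemma vn_simps[simp]:
  "vn b j \<noteq> lab 0 i" "vn b j \<noteq> lab 1 i" "vn b j \<noteq> lab 2 i" "vn b j \<noteq> lab 5 i"
  "lab 0 i \<noteq> vn b j" "lab 1 i \<noteq> vn b j" "lab 2 i \<noteq> vn b j" "lab 5 i \<noteq> vn b j"
  "vn b j = lab 4 k \<longleftrightarrow> j < b \<and> j = k" "vn b j = lab 3 k \<longleftrightarrow> \<not> j < b \<and> j = k"
  "lab 4 k = vn b j \<longleftrightarrow> j < b \<and> j = k" "lab 3 k = vn b j \<longleftrightarrow> \<not> j < b \<and> j = k"
  "vn b j = vn b j' \<longleftrightarrow> j = j'"
  "vn b j \<noteq> lab (Suc 0) i" "lab (Suc 0) i \<noteq> vn b j"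
  unfolding vn_def by auto

definition Gv :: "nat \<Rightarrow> nat \<Rightarrow> nat \<Rightarrow> nat set" where
  "Gv n a b = {lab 0 i | i. i < n} \<union> {lab 1 i | i. i < n} \<union> {lab 2 i | i. a \<le> i \<and> i < n}
     \<union> {lab 4 j | j. j < n} \<union> {lab 5 j | j. j < n} \<union> {lab 3 j | j. b \<le> j \<and> j < n}"

definition Ge :: "nat \<Rightarrow> nat \<Rightarrow> nat \<Rightarrow> (nat \<times> nat) set" where
  "Ge n a b = {(lab 0 i, vn b j) | i j. i < n \<and> j < n} \<union> {(lab 1 i, lab 0 i) | i. i < a}
     \<union> {(lab 0 i, lab 2 i) | i. a \<le> i \<and> i < n} \<union> {(lab 1 i, lab 2 i) | i. a \<le> i \<and> i < n}
     \<union> {(lab 4 j, lab 5 j) | j. j < n} \<union> {(lab 4 j, lab 3 j) | j. b \<le> j \<and> j < n}"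

definition G :: "nat \<Rightarrow> nat \<Rightarrow> nat \<Rightarrow> digraph" where
  "G n a b = (Gv n a b, Ge n a b)"

lemma contract1:
  assumes "a < n"
  shows "contract (G n a b) (lab 0 a) (lab 2 a) = G n (Suc a) b"
proof -
  let ?f = "\<lambda>v. if v = lab 2 a then lab 0 a else v"
  have V: "Gv n a b - {lab 2 a} = Gv n (Suc a) b"
    unfolding Gv_def using assms by (auto simp: Suc_le_eq)
  have E: "{(?f s, ?f t) | s t. (s,t) \<in> Ge n a b \<and> ?f s \<noteq> ?f t} = Ge n (Suc a) b"
  proof
    show "{(?f s, ?f t) | s t. (s,t) \<in> Ge n a b \<and> ?f s \<noteq> ?f t} \<subseteq> Ge n (Suc a) b"
      unfolding Ge_def using assms by (auto simp: Suc_le_eq less_Suc_eq)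
  next
    show "Ge n (Suc a) b \<subseteq> {(?f s, ?f t) | s t. (s,t) \<in> Ge n a b \<and> ?f s \<noteq> ?f t}"
    proof
      fix e assume e: "e \<in> Ge n (Suc a) b"
      show "e \<in> {(?f s, ?f t) | s t. (s,t) \<in> Ge n a b \<and> ?f s \<noteq> ?f t}"
      proof (cases "e = (lab 1 a, lab 0 a)")
        case True
        have "(lab 1 a, lab 2 a) \<in> Ge n a b" unfolding Ge_def using assms by auto
        moreover have "?f (lab 2 a) = lab 0 a" "?f (lab 1 a) = lab 1 a" by auto
        ultimately show ?thesis using True
          by (intro CollectI exI[of _ "lab 1 a"] exI[of _ "lab 2 a"]) auto
      next
        case False
        have "e \<in> Ge n a b \<and> fst e \<noteq> lab 2 a \<and> snd e \<noteq> lab 2 a \<and> fst e \<noteq> snd e"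
          using \<open>e \<in> Ge n (Suc a) b\<close> False unfolding Ge_def using assms
          by (auto simp: Suc_le_eq less_Suc_eq)
        then show ?thesis by (intro CollectI exI[of _ "fst e"] exI[of _ "snd e"]) auto
      qed
    qed
  qed
  show ?thesis unfolding contract_def G_def Let_def using V E by simp
qed

lemma vn_Suc: "vn (Suc b) j = (if j = b then lab 4 b else vn b j)"
  unfolding vn_def by auto

lemma contract2:
  assumes "b < n"
  shows "contract (G n n b) (lab 4 b) (lab 3 b) = G n n (Suc b)"
proof -
  let ?f = "\<lambda>v. if v = lab 3 b then lab 4 b else v"
  have V: "Gv n n b - {lab 3 b} = Gv n n (Suc b)"
    unfolding Gv_def using assms by (auto simp: Suc_le_eq)
  have E: "{(?f s, ?f t) | s t. (s,t) \<in> Ge n n b \<and> ?f s \<noteq> ?f t} = Ge n n (Suc b)"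
  proof
    show "{(?f s, ?f t) | s t. (s,t) \<in> Ge n n b \<and> ?f s \<noteq> ?f t} \<subseteq> Ge n n (Suc b)"
      unfolding Ge_def using assms
      apply (auto simp: Suc_le_eq less_Suc_eq vn_Suc)
      subgoal for i j by (rule exI[of _ i], rule exI[of _ j]) auto
      subgoal for i j by (rule exI[of _ i], rule exI[of _ j]) auto
      done
  next
    show "Ge n n (Suc b) \<subseteq> {(?f s, ?f t) | s t. (s,t) \<in> Ge n n b \<and> ?f s \<noteq> ?f t}"
    proof
      fix e assume e: "e \<in> Ge n n (Suc b)"
      show "e \<in> {(?f s, ?f t) | s t. (s,t) \<in> Ge n n b \<and> ?f s \<noteq> ?f t}"
      proof (cases "\<exists>i<n. e = (lab 0 i, lab 4 b)")
        case True
        then obtain i where i: "i < n" "e = (lab 0 i, lab 4 b)" by blast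
        have "(lab 0 i, lab 3 b) \<in> Ge n n b" unfolding Ge_def using assms i
          by auto
        moreover have "?f (lab 3 b) = lab 4 b" "?f (lab 0 i) = lab 0 i" by auto
        ultimately show ?thesis using i
          by (intro CollectI exI[of _ "lab 0 i"] exI[of _ "lab 3 b"]) auto
      next
        case False
        have "e \<in> Ge n n b \<and> fst e \<noteq> lab 3 b \<and> snd e \<noteq> lab 3 b \<and> fst e \<noteq> snd e"
          using e False unfolding Ge_def using assms
          by (auto simp: Suc_le_eq less_Suc_eq vn_Suc split: if_splits)
        then show ?thesis by (intro CollectI exI[of _ "fst e"] exI[of _ "snd e"]) auto
      qed
    qed
  qed
  show ?thesis unfolding contract_def G_def Let_def using V E by simp
qed



lemma fst_G[simp]: "fst (G n a b) = Gv n a b" and snd_G[simp]: "snd (G n a b) = Ge n a b"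
  unfolding G_def by auto

lemma notV3:
  assumes "{e \<in> snd D. fst e = v \<or> snd e = v} \<subseteq> S" "finite S" "card S \<le> 2"
  shows "v \<notin> V3 D"
proof -
  have "card {e \<in> snd D. fst e = v \<or> snd e = v} \<le> 2" using assms card_mono le_trans by blast
  then show ?thesis unfolding V3_def by auto
qed

lemma card2: "card {x, y} \<le> 2" by (simp add: card_insert_if)

lemma tc1:
  assumes "a < n"
  shows "two_contractible (G n a b) (lab 0 a) (lab 2 a)"
proof -
  have e: "(lab 0 a, lab 2 a) \<in> Ge n a b" unfolding Ge_def using assms by auto
  have y3: "lab 2 a \<notin> V3 (G n a b)"
    by (rule notV3[where S="{(lab 0 a, lab 2 a),(lab 1 a, lab 2 a)}"])
       (auto simp: Ge_def card2)
  have p3: "lab 1 a \<notin> V3 (G n a b)"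
    by (rule notV3[where S="{(lab 1 a, lab 2 a)}"]) (auto simp: Ge_def)
  have reach: "z \<in> {lab 2 a, lab 1 a}" if "(z, lab 2 a) \<in> (Ge n a b - {(lab 0 a, lab 2 a)})\<^sup>*" for z
    using that
  proof (induction rule: converse_rtrancl_induct)
    case base then show ?case by simp
  next
    case (step z z')
    then show ?case unfolding Ge_def by auto
  qed
  show ?thesis unfolding two_contractible_def using e y3 p3 reach by auto
qed

lemma tc2:
  assumes "b < n"
  shows "two_contractible (G n n b) (lab 4 b) (lab 3 b)"
proof -
  have e: "(lab 4 b, lab 3 b) \<in> Ge n n b" unfolding Ge_def using assms by auto
  have x3: "lab 4 b \<notin> V3 (G n n b)"
    by (rule notV3[where S="{(lab 4 b, lab 3 b),(lab 4 b, lab 5 b)}"])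
       (auto simp: Ge_def card2)
  have t3: "lab 5 b \<notin> V3 (G n n b)"
    by (rule notV3[where S="{(lab 4 b, lab 5 b)}"]) (auto simp: Ge_def)
  have reach: "w \<in> {lab 4 b, lab 5 b}" if "(lab 4 b, w) \<in> (Ge n n b - {(lab 4 b, lab 3 b)})\<^sup>*" for w
    using that
  proof (induction rule: rtrancl_induct)
    case base then show ?case by simp
  next
    case (step w w')
    then show ?case unfolding Ge_def by auto
  qed
  show ?thesis unfolding two_contractible_def using e x3 t3 reach by auto
qed

lemma Ge_sub: "a \<le> n \<Longrightarrow> Ge n a b \<subseteq> Gv n a b \<times> Gv n a b"
  unfolding Ge_def Gv_def vn_def by auto

lemma stage1: "a \<le> n \<Longrightarrow> dtop_minor (G n a 0) (G n 0 0)"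
proof (induction a)
  case 0
  show ?case by (rule dtop_minor.sub) (use Ge_sub[of 0 n] in \<open>auto simp: is_subgraph_def\<close>)
next
  case (Suc a)
  then have "dtop_minor (contract (G n a 0) (lab 0 a) (lab 2 a)) (G n 0 0)"
    using tc1[of a n 0] by (intro dtop_minor.contr) auto
  then show ?case using contract1[of a n 0] Suc by simp
qed

lemma stage2: "b \<le> n \<Longrightarrow> dtop_minor (G n n b) (G n 0 0)"
proof (induction b)
  case 0
  show ?case using stage1[of n n] by simp
next
  case (Suc b)
  then have "dtop_minor (contract (G n n b) (lab 4 b) (lab 3 b)) (G n 0 0)"
    using tc2[of b n] by (intro dtop_minor.contr) auto
  then show ?case using contract2[of b n] Suc by simp
qed

lemma J_digraph: "is_digraph (G n 0 0)"
proof -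
  have "finite (Gv n 0 0)" unfolding Gv_def by (intro finite_UnI finite_image_set) auto
  moreover have "\<forall>v. (v,v) \<notin> Ge n 0 0" unfolding Ge_def by auto
  ultimately show ?thesis unfolding is_digraph_def using Ge_sub[of 0 n] by auto
qed

lemma SV_J: "X \<subseteq> Ge n 0 0 \<Longrightarrow> SV (G n 0 0) X = {}"
  unfolding SV_def Ge_def snd_G by auto

lemma decomp_sub: "is_branch_decomp D N A \<beta> \<Longrightarrow> \<beta> ` side_leaves N A a b \<subseteq> snd D"
  unfolding is_branch_decomp_def side_leaves_def bij_betw_def by auto

lemma decomp_exists:
  assumes "finite (snd D)" "card (snd D) \<ge> 2"
  shows "\<exists>N A \<beta>. is_branch_decomp D N A \<beta>"
proof -
  obtain N A where t: "is_tree N A" "\<forall>u\<in>N. tdeg A u \<le> 3" "card (leaves N A) = card (snd D)"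
    using tree_exists[OF assms(2)] by blast
  have "finite (leaves N A)" using tree_D(1)[OF t(1)] unfolding leaves_def by auto
  then obtain \<beta> where "bij_betw \<beta> (leaves N A) (snd D)"
    using finite_same_card_bij[OF _ assms(1) t(3)] by blast
  then show ?thesis using t unfolding is_branch_decomp_def by blast
qed

lemma finite_Gv: "finite (Gv n a b)" unfolding Gv_def by (intro finite_UnI finite_image_set) auto

lemma dbw_J: assumes "n \<ge> 1" shows "dbw (G n 0 0) = 0"
proof -
  have "decomp_width (G n 0 0) N A \<beta> = 0" if "is_branch_decomp (G n 0 0) N A \<beta>" for N A \<beta>
  proof -
    have "{card (SV (G n 0 0) (\<beta> ` side_leaves N A a b) \<union> SV (G n 0 0) (snd (G n 0 0) - \<beta> ` side_leaves N A a b)) | a b. (a, b) \<in> A} \<subseteq> {0}"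
      using SV_J decomp_sub[OF that] by auto
    then have "insert 0 {card (SV (G n 0 0) (\<beta> ` side_leaves N A a b) \<union> SV (G n 0 0) (snd (G n 0 0) - \<beta> ` side_leaves N A a b)) | a b. (a, b) \<in> A} = {0}"
      by blast
    then show ?thesis unfolding decomp_width_def by (metis Max_singleton)
  qed
  then have sub: "{decomp_width (G n 0 0) N A \<beta> | N A \<beta>. is_branch_decomp (G n 0 0) N A \<beta>} \<subseteq> {0}" by auto
  have fin: "finite (Ge n 0 0)"
    by (rule finite_subset[OF Ge_sub[of 0 n 0]]) (auto intro: finite_Gv)
  have "{(lab 0 0, lab 3 0), (lab 0 0, lab 2 0)} \<subseteq> Ge n 0 0" using assms unfolding Ge_def vn_def by auto
  then have "card {(lab 0 0, lab 3 0), (lab 0 0, lab 2 0)} \<le> card (Ge n 0 0)" using fin by (rule card_mono[rotated])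
  moreover have "card {(lab 0 0, lab 3 0), (lab 0 0, lab 2 0)} = 2" by simp
  ultimately have "card (Ge n 0 0) \<ge> 2" by linarith
  then obtain N A \<beta> where d: "is_branch_decomp (G n 0 0) N A \<beta>" using decomp_exists[of "G n 0 0"] fin by auto
  let ?S = "{decomp_width (G n 0 0) N A \<beta> | N A \<beta>. is_branch_decomp (G n 0 0) N A \<beta>}"
  have "decomp_width (G n 0 0) N A \<beta> \<in> ?S" using d by blast
  then have "?S \<noteq> {}" by blast
  then have "?S = {0}" using sub by (rule_tac subset_singletonD[OF sub, THEN disjE]) auto
  then have "Inf ?S = 0" by simp
  moreover have "Ge n 0 0 \<noteq> {}" using fin \<open>card (Ge n 0 0) \<ge> 2\<close> by auto
  ultimately show ?thesis unfolding dbw_def by simp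
qed



lemma GeH: "e \<in> Ge n n n \<longleftrightarrow> (\<exists>i j. i < n \<and> j < n \<and> e = (lab 0 i, lab 4 j)) \<or>
   (\<exists>i. i < n \<and> e = (lab 1 i, lab 0 i)) \<or> (\<exists>j. j < n \<and> e = (lab 4 j, lab 5 j))"
  unfolding Ge_def vn_def by auto

lemma same_side:
  assumes "X \<subseteq> snd D" "y \<notin> SV D X" "y \<notin> SV D (snd D - X)" "(p,y) \<in> snd D" "(y,q) \<in> snd D"
    "e \<in> snd D" "fst e = y \<or> snd e = y"
  shows "e \<in> X \<longleftrightarrow> (p,y) \<in> X"
proof (cases "(p,y) \<in> X")
  case True
  have out: "(y,z) \<in> X" if "(y,z) \<in> snd D" for z
    using assms(3) True that assms(4) unfolding SV_def by blast
  have inn: "(x,y) \<in> X" if "(x,y) \<in> snd D" for x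
    using assms(2) out[OF assms(5)] that unfolding SV_def by blast
  show ?thesis using True out inn assms(6,7) by (cases e) auto
next
  case False
  have out: "(y,z) \<notin> X" if "(y,z) \<in> snd D" for z
    using assms(2) False that assms(4) unfolding SV_def by blast
  have inn: "(x,y) \<notin> X" if "(x,y) \<in> snd D" for x
    using assms(3) out[OF assms(5)] assms(5) that assms(1) unfolding SV_def by blast
  show ?thesis using False out inn assms(6,7) by (cases e) auto
qed

lemma SV_sub: "snd D \<subseteq> fst D \<times> fst D \<Longrightarrow> SV D X \<subseteq> fst D"
  unfolding SV_def by auto

lemma cut:
  assumes n: "n \<ge> 1" and X: "X \<subseteq> Ge n n n"
    and W: "W = SV (G n n n) X \<union> SV (G n n n) (Ge n n n - X)"
  shows "n \<le> card W \<or> card X \<le> card W * card W + 2 * card W \<or>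
         card (Ge n n n - X) \<le> card W * card W + 2 * card W"
proof -
  let ?E = "Ge n n n"
  define Core where "Core = lab 0 ` {..<n} \<union> lab 4 ` {..<n}"
  define allX where "allX c \<longleftrightarrow> (\<forall>e\<in>?E. (fst e = c \<or> snd e = c) \<longrightarrow> e \<in> X)" for c
  define noneX where "noneX c \<longleftrightarrow> (\<forall>e\<in>?E. (fst e = c \<or> snd e = c) \<longrightarrow> e \<notin> X)" for c
  have finW: "finite W"
  proof -
    have "W \<subseteq> Gv n n n" unfolding W using SV_sub[of "G n n n"] Ge_sub[of n n n] by auto
    then show ?thesis using finite_Gv finite_subset by blast
  qed
  have kc: "allX c \<or> noneX c" if c: "c \<in> Core" "c \<notin> W" for c
  proof -
    obtain p q where pq: "(p,c) \<in> ?E" "(c,q) \<in> ?E"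
    proof (cases "\<exists>i<n. c = lab 0 i")
      case True
      then obtain i where "i < n" "c = lab 0 i" by blast
      then show ?thesis using that[of "lab 1 i" "lab 4 0"] n unfolding GeH by auto
    next
      case False
      then obtain j where "j < n" "c = lab 4 j" using c(1) unfolding Core_def by auto
      then show ?thesis using that[of "lab 0 0" "lab 5 j"] n unfolding GeH by auto
    qed
    have "e \<in> X \<longleftrightarrow> (p,c) \<in> X" if "e \<in> ?E" "fst e = c \<or> snd e = c" for e
      by (rule same_side[of X "G n n n" c p q e]) (use X c(2) W pq that in auto)
    then show ?thesis unfolding allX_def noneX_def by blast
  qed
  define Wu where "Wu = {i. i < n \<and> lab 0 i \<in> W}"
  define Wx where "Wx = {j. j < n \<and> lab 4 j \<in> W}"
  have finWu: "finite Wu" "finite Wx" unfolding Wu_def Wx_def by auto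
  have cWuWx: "card Wu + card Wx \<le> card W"
  proof -
    have "inj_on (lab 0) Wu" by (simp add: inj_on_def)
    then have "card (lab 0 ` Wu) = card Wu" by (rule card_image)
    moreover have "inj_on (lab 4) Wx" by (simp add: inj_on_def)
    then have "card (lab 4 ` Wx) = card Wx" by (rule card_image)
    moreover have "lab 0 ` Wu \<inter> lab 4 ` Wx = {}" by auto
    moreover have "lab 0 ` Wu \<union> lab 4 ` Wx \<subseteq> W" unfolding Wu_def Wx_def by auto
    ultimately show ?thesis using finW finWu
      by (metis card_Un_disjoint card_mono finite_imageI)
  qed
  define B where "B = (\<lambda>(i,j). (lab 0 i, lab 4 j)) ` (Wu \<times> Wx) \<union> (\<lambda>i. (lab 1 i, lab 0 i)) ` Wu
      \<union> (\<lambda>j. (lab 4 j, lab 5 j)) ` Wx"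
  have cB: "card B \<le> card W * card W + 2 * card W"
  proof -
    have "card B \<le> card ((\<lambda>(i,j). (lab 0 i, lab 4 j)) ` (Wu \<times> Wx)) + card ((\<lambda>i. (lab 1 i, lab 0 i)) ` Wu)
        + card ((\<lambda>j. (lab 4 j, lab 5 j)) ` Wx)"
      unfolding B_def by (meson card_Un_le add_le_mono1 le_trans)
    also have "\<dots> \<le> card (Wu \<times> Wx) + card Wu + card Wx"
      by (intro add_le_mono card_image_le) (auto simp: finWu)
    also have "\<dots> = card Wu * card Wx + card Wu + card Wx" by (simp add: card_cartesian_product)
    also have "\<dots> \<le> card W * card W + 2 * card W"
    proof -
      have "card Wu \<le> card W" "card Wx \<le> card W" using cWuWx by auto
      then have "card Wu * card Wx \<le> card W * card W" by (rule mult_le_mono)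
      then show ?thesis using cWuWx by linarith
    qed
    finally show ?thesis .
  qed
  have inB: "e \<in> B" if e: "e \<in> ?E" and nd: "\<And>c. c \<in> Core \<Longrightarrow> c \<notin> W \<Longrightarrow> fst e = c \<or> snd e = c \<Longrightarrow> False" for e
  proof -
    have u: "lab 0 i \<in> W" if "i < n" "fst e = lab 0 i \<or> snd e = lab 0 i" for i
      using nd[of "lab 0 i"] that unfolding Core_def by auto
    have x: "lab 4 j \<in> W" if "j < n" "fst e = lab 4 j \<or> snd e = lab 4 j" for j
      using nd[of "lab 4 j"] that unfolding Core_def by auto
    show ?thesis using e unfolding GeH
    proof (elim disjE exE conjE)
      fix i j assume "i < n" "j < n" "e = (lab 0 i, lab 4 j)"
      then show ?thesis using u[of i] x[of j] unfolding B_def Wu_def Wx_def by auto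
    next
      fix i assume "i < n" "e = (lab 1 i, lab 0 i)"
      then show ?thesis using u[of i] unfolding B_def Wu_def by auto
    next
      fix j assume "j < n" "e = (lab 4 j, lab 5 j)"
      then show ?thesis using x[of j] unfolding B_def Wx_def by auto
    qed
  qed
  have finB: "finite B" unfolding B_def using finWu by auto
  show ?thesis
  proof (cases "\<exists>c\<in>Core - W. allX c")
    case False
    have "X \<subseteq> B"
    proof
      fix e assume eX: "e \<in> X"
      show "e \<in> B"
      proof (rule inB)
        show "e \<in> ?E" using eX X by auto
        fix c assume c: "c \<in> Core" "c \<notin> W" "fst e = c \<or> snd e = c"
        then have "noneX c" using kc False by auto
        then show False using eX X c(3) unfolding noneX_def by auto
      qed
    qed
    then have "card X \<le> card B" using finB card_mono by blast
    then show ?thesis using cB by linarith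
  next
    case True
    then obtain c1 where c1: "c1 \<in> Core" "c1 \<notin> W" "allX c1" by blast
    show ?thesis
    proof (cases "\<exists>c\<in>Core - W. noneX c")
      case False
      have "?E - X \<subseteq> B"
      proof
        fix e assume eX: "e \<in> ?E - X"
        show "e \<in> B"
        proof (rule inB)
          show "e \<in> ?E" using eX by auto
          fix c assume c: "c \<in> Core" "c \<notin> W" "fst e = c \<or> snd e = c"
          then have "allX c" using kc False by auto
          then show False using eX c(3) unfolding allX_def by auto
        qed
      qed
      then have "card (?E - X) \<le> card B" using finB card_mono by blast
      then show ?thesis using cB by linarith
    next
      case True
      then obtain c2 where c2: "c2 \<in> Core" "c2 \<notin> W" "noneX c2" by blast
      have ee: "(lab 0 i, lab 4 j) \<in> ?E" if "i < n" "j < n" for i j using that unfolding GeH by auto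
      have "n \<le> card W"
      proof (cases "\<exists>i<n. c1 = lab 0 i")
        case True
        then obtain i1 where i1: "i1 < n" "c1 = lab 0 i1" by blast
        show ?thesis
        proof (cases "\<exists>i<n. c2 = lab 0 i")
          case True
          then obtain i2 where i2: "i2 < n" "c2 = lab 0 i2" by blast
          have "lab 4 ` {..<n} \<subseteq> W"
          proof
            fix v assume "v \<in> lab 4 ` {..<n}"
            then obtain j where j: "j < n" "v = lab 4 j" by auto
            show "v \<in> W"
            proof (rule ccontr)
              assume "v \<notin> W"
              then have "allX v \<or> noneX v" using kc j unfolding Core_def by auto
              moreover have "(lab 0 i1, lab 4 j) \<in> X" using c1 i1 ee[OF i1(1) j(1)] unfolding allX_def by auto
              moreover have "(lab 0 i2, lab 4 j) \<notin> X" using c2 i2 ee[OF i2(1) j(1)] unfolding noneX_def by auto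
              ultimately show False using ee[OF i1(1) j(1)] ee[OF i2(1) j(1)] j
                unfolding allX_def noneX_def by auto
            qed
          qed
          then have "card (lab 4 ` {..<n}) \<le> card W" using finW card_mono by blast
          moreover have "inj_on (lab 4) {..<n}" by (simp add: inj_on_def)
          then have "card (lab 4 ` {..<n}) = n" by (simp add: card_image)
          ultimately show ?thesis by simp
        next
          case False
          then obtain j2 where j2: "j2 < n" "c2 = lab 4 j2" using c2 unfolding Core_def by auto
          have "(lab 0 i1, lab 4 j2) \<in> X" using c1 i1 ee[OF i1(1) j2(1)] unfolding allX_def by auto
          moreover have "(lab 0 i1, lab 4 j2) \<notin> X" using c2 j2 ee[OF i1(1) j2(1)] unfolding noneX_def by auto
          ultimately show ?thesis by blast
        qed
      next
        case False
        then obtain j1 where j1: "j1 < n" "c1 = lab 4 j1" using c1 unfolding Core_def by auto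
        show ?thesis
        proof (cases "\<exists>i<n. c2 = lab 0 i")
          case True
          then obtain i2 where i2: "i2 < n" "c2 = lab 0 i2" by blast
          have "(lab 0 i2, lab 4 j1) \<in> X" using c1 j1 ee[OF i2(1) j1(1)] unfolding allX_def by auto
          moreover have "(lab 0 i2, lab 4 j1) \<notin> X" using c2 i2 ee[OF i2(1) j1(1)] unfolding noneX_def by auto
          ultimately show ?thesis by blast
        next
          case False
          then obtain j2 where j2: "j2 < n" "c2 = lab 4 j2" using c2 unfolding Core_def by auto
          have "lab 0 ` {..<n} \<subseteq> W"
          proof
            fix v assume "v \<in> lab 0 ` {..<n}"
            then obtain i where i: "i < n" "v = lab 0 i" by auto
            show "v \<in> W"
            proof (rule ccontr)
              assume "v \<notin> W"
              then have "allX v \<or> noneX v" using kc i unfolding Core_def by auto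
              moreover have "(lab 0 i, lab 4 j1) \<in> X" using c1 j1 ee[OF i(1) j1(1)] unfolding allX_def by auto
              moreover have "(lab 0 i, lab 4 j2) \<notin> X" using c2 j2 ee[OF i(1) j2(1)] unfolding noneX_def by auto
              ultimately show False using ee[OF i(1) j1(1)] ee[OF i(1) j2(1)] i
                unfolding allX_def noneX_def by auto
            qed
          qed
          then have "card (lab 0 ` {..<n}) \<le> card W" using finW card_mono by blast
          moreover have "inj_on (lab 0) {..<n}" by (simp add: inj_on_def)
          then have "card (lab 0 ` {..<n}) = n" by (simp add: card_image)
          ultimately show ?thesis by simp
        qed
      qed
      then show ?thesis by simp
    qed
  qed
qed



lemma finite_Ge: "a \<le> n \<Longrightarrow> finite (Ge n a b)"
  by (rule finite_subset[OF Ge_sub]) (auto intro: finite_Gv)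

lemma width_H:
  assumes n: "n \<ge> 1" and d: "is_branch_decomp (G n n n) N A \<beta>"
  shows "\<exists>w. w \<le> decomp_width (G n n n) N A \<beta> \<and> (n \<le> w \<or> n * n \<le> 3 * (w * w + 2 * w))"
proof -
  let ?E = "Ge n n n"
  let ?m = "card ?E"
  have finE: "finite ?E" using finite_Ge by auto
  have "(\<lambda>(i,j). (lab 0 i, lab 4 j)) ` ({..<n} \<times> {..<n}) \<subseteq> ?E" by (auto simp: GeH)
  moreover have "inj_on (\<lambda>(i,j). (lab 0 i, lab 4 j)) ({..<n} \<times> {..<n})" by (auto simp: inj_on_def)
  then have "card ((\<lambda>(i,j). (lab 0 i, lab 4 j)) ` ({..<n} \<times> {..<n})) = n * n"
    by (simp add: card_image card_cartesian_product)
  ultimately have mn: "n * n \<le> ?m" using finE card_mono by metis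
  have tr: "is_tree N A" and dg: "\<forall>u\<in>N. tdeg A u \<le> 3" and bij: "bij_betw \<beta> (leaves N A) ?E"
    using d unfolding is_branch_decomp_def by auto
  have cl: "card (leaves N A) = ?m" using bij by (rule bij_betw_same_card)
  have m2: "?m \<ge> 2"
  proof -
    have "(lab 0 0, lab 4 0) \<in> ?E" "(lab 1 0, lab 0 0) \<in> ?E" using n unfolding GeH by auto
    then have "{(lab 0 0, lab 4 0), (lab 1 0, lab 0 0)} \<subseteq> ?E" by auto
    then have "card {(lab 0 0, lab 4 0), (lab 1 0, lab 0 0)} \<le> ?m" using finE by (rule card_mono[rotated])
    moreover have "card {(lab 0 0, lab 4 0), (lab 1 0, lab 0 0)} = 2" by simp
    ultimately show ?thesis by linarith
  qed
  obtain a b where ab: "(a,b) \<in> A" "?m \<le> 3 * card (side_leaves N A a b)"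
    "3 * card (side_leaves N A a b) \<le> 2 * ?m"
    using balanced[OF tr dg cl[symmetric] m2] by blast
  define X where "X = \<beta> ` side_leaves N A a b"
  have sl: "side_leaves N A a b \<subseteq> leaves N A" unfolding side_leaves_def by auto
  have inj: "inj_on \<beta> (side_leaves N A a b)" using bij sl unfolding bij_betw_def
    by (meson inj_on_subset)
  have cX: "card X = card (side_leaves N A a b)" unfolding X_def using inj by (rule card_image)
  have XE: "X \<subseteq> ?E" unfolding X_def using decomp_sub[OF d] by simp
  have cEX: "card (?E - X) = ?m - card X" using XE finE by (meson card_Diff_subset finite_subset)
  define W where "W = SV (G n n n) X \<union> SV (G n n n) (?E - X)"
  have "card W \<in> {card (SV (G n n n) (\<beta> ` side_leaves N A a b) \<union> SV (G n n n) (snd (G n n n) - \<beta> ` side_leaves N A a b))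
                    | a b. (a, b) \<in> A}"
    unfolding W_def X_def using ab(1) by auto
  moreover have "finite {card (SV (G n n n) (\<beta> ` side_leaves N A a b) \<union> SV (G n n n) (snd (G n n n) - \<beta> ` side_leaves N A a b))
                    | a b. (a, b) \<in> A}"
  proof -
    have "finite A" using tree_D(1,2)[OF tr] by (meson finite_SigmaI finite_subset)
    then show ?thesis
      by (rule finite_subset[rotated, OF finite_imageI[of A "\<lambda>(a,b). card (SV (G n n n) (\<beta> ` side_leaves N A a b) \<union> SV (G n n n) (snd (G n n n) - \<beta> ` side_leaves N A a b))"]]) auto
  qed
  ultimately have wle: "card W \<le> decomp_width (G n n n) N A \<beta>"
    unfolding decomp_width_def by (meson Max_ge finite_insert insertCI)
  from cut[OF n XE W_def]
  have "n \<le> card W \<or> card X \<le> card W * card W + 2 * card W \<or>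
         card (?E - X) \<le> card W * card W + 2 * card W" .
  then have "n \<le> card W \<or> n * n \<le> 3 * (card W * card W + 2 * card W)"
  proof (elim disjE)
    assume "card X \<le> card W * card W + 2 * card W"
    then have "3 * card X \<le> 3 * (card W * card W + 2 * card W)" by simp
    moreover have "n * n \<le> 3 * card X" using ab(2) cX mn by linarith
    ultimately show ?thesis by linarith
  next
    assume "card (?E - X) \<le> card W * card W + 2 * card W"
    then have "3 * card (?E - X) \<le> 3 * (card W * card W + 2 * card W)" by simp
    moreover have "n * n \<le> 3 * card (?E - X)" using ab(3) cX cEX mn by linarith
    ultimately show ?thesis by linarith
  qed simp
  then show ?thesis using wle by blast
qed

theorem mainTheorem12:
  shows "\<not> (\<exists>g :: nat \<Rightarrow> nat. \<forall>J H. is_digraph J \<longrightarrow> dtop_minor H J \<longrightarrow> dbw H \<le> g (dbw J))"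
proof
  assume "\<exists>g :: nat \<Rightarrow> nat. \<forall>J H. is_digraph J \<longrightarrow> dtop_minor H J \<longrightarrow> dbw H \<le> g (dbw J)"
  then obtain g :: "nat \<Rightarrow> nat" where g: "\<And>J H. is_digraph J \<Longrightarrow> dtop_minor H J \<Longrightarrow> dbw H \<le> g (dbw J)"
    by blast
  define K where "K = g 0"
  define n where "n = 2 * K + 2"
  have n1: "n \<ge> 1" unfolding n_def by simp
  have leK: "dbw (G n n n) \<le> K"
    using g[OF J_digraph stage2[of n n]] dbw_J[OF n1] unfolding K_def by simp
  let ?S = "{decomp_width (G n n n) N A \<beta> | N A \<beta>. is_branch_decomp (G n n n) N A \<beta>}"
  have finE: "finite (Ge n n n)" using finite_Ge by auto
  have m2: "card (Ge n n n) \<ge> 2"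
  proof -
    have "(lab 0 0, lab 4 0) \<in> Ge n n n" "(lab 1 0, lab 0 0) \<in> Ge n n n" using n1 unfolding GeH by auto
    then have "{(lab 0 0, lab 4 0), (lab 1 0, lab 0 0)} \<subseteq> Ge n n n" by auto
    then have "card {(lab 0 0, lab 4 0), (lab 1 0, lab 0 0)} \<le> card (Ge n n n)" using finE by (rule card_mono[rotated])
    moreover have "card {(lab 0 0, lab 4 0), (lab 1 0, lab 0 0)} = 2" by simp
    ultimately show ?thesis by linarith
  qed
  obtain N0 A0 \<beta>0 where "is_branch_decomp (G n n n) N0 A0 \<beta>0"
    using decomp_exists[of "G n n n"] finE m2 by auto
  then have "?S \<noteq> {}" by blast
  then have "Inf ?S \<in> ?S" by (rule Inf_nat_def1)
  then obtain N A \<beta> where d: "is_branch_decomp (G n n n) N A \<beta>" and eq: "Inf ?S = decomp_width (G n n n) N A \<beta>"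
    by blast
  have ne: "Ge n n n \<noteq> {}" using m2 by auto
  have dw: "dbw (G n n n) = decomp_width (G n n n) N A \<beta>" unfolding dbw_def using ne eq by simp
  obtain w where w: "w \<le> decomp_width (G n n n) N A \<beta>" "n \<le> w \<or> n * n \<le> 3 * (w * w + 2 * w)"
    using width_H[OF n1 d] by blast
  have "decomp_width (G n n n) N A \<beta> \<le> K" using leK dw by simp
  then have wK: "w \<le> K" using w(1) by linarith
  have "w * w \<le> K * K" using wK wK by (rule mult_le_mono)
  moreover have "n * n = 4 * (K * K) + 8 * K + 4" unfolding n_def by (simp add: algebra_simps)
  moreover have "K < n" unfolding n_def by simp
  moreover have "3 * (w * w + 2 * w) = 3 * (w * w) + 6 * w" by simp
  ultimately have "\<not> n \<le> w" "\<not> n * n \<le> 3 * (w * w + 2 * w)" using wK by linarith+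
  then show False using w(2) by blast
qed

end
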